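(* Let $2\le 2k<n$ and let $v=v(t)>0$ be a smooth function on $\mathbb R$, viewed as a function on $\mathbb R\times\mathbb S^{n-1}$, and set $g_v=v^{4k/(n-2k)}g_{cyl}$ and $h(t)=v(t)^2-\big(\frac{2k}{n-2k}\big)^2\dot v(t)^2$. Assume $h_0:=h(0)>0$. Then $v$ solves $\sigma_k(B_{g_v})=0$ on $\mathbb R\times\mathbb S^{n-1}$ if and only if $v(t)=\sqrt{h_0}\cosh\big(\frac{n-2k}{2k}t-c\big)$ for some $c\in\mathbb R$.
   Context: $g_{cyl}=dt^2+d\theta^2$ is the product metric on $\mathbb R\times\mathbb S^{n-1}$ with $d\theta^2$ the round metric. For a metric $g$, $A_g=\frac1{n-2}(\mathrm{Ric}_g-\frac{R_g}{2(n-1)}g)$ is its Schouten tensor, and $B_{g_v}=\frac{n-2k}{2k}v^{2n/(n-2k)}g_v^{-1}A_{g_v}$ (a symmetric endomorphism); $\sigma_k$ denotes the $k$-th elementary symmetric function of its eigenvalues. *)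

theory Defs
  imports "HOL-Analysis.Analysis"
begin

text \<open>Local-coordinate Riemannian geometry on an open subset of R^n, indices of finite type 'n.
  A metric is a field of symmetric matrices G :: real^'n \<Rightarrow> real^'n^'n, with entries G x $ i $ j.\<close>

definition pd :: "'n::finite \<Rightarrow> (real^'n \<Rightarrow> real) \<Rightarrow> real^'n \<Rightarrow> real" where
  "pd l f x = deriv (\<lambda>s. f (x + s *\<^sub>R axis l 1)) 0"

definition christoffel :: "(real^'n \<Rightarrow> real^'n^'n) \<Rightarrow> 'n::finite \<Rightarrow> 'n \<Rightarrow> 'n \<Rightarrow> real^'n \<Rightarrow> real" where
  "christoffel G m i j x = (1/2) * (\<Sum>l\<in>UNIV. matrix_inv (G x) $ m $ l *
      (pd i (\<lambda>y. G y $ j $ l) x + pd j (\<lambda>y. G y $ i $ l) x - pd l (\<lambda>y. G y $ i $ j) x))"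

definition ricci :: "(real^'n \<Rightarrow> real^'n^'n) \<Rightarrow> 'n::finite \<Rightarrow> 'n \<Rightarrow> real^'n \<Rightarrow> real" where
  "ricci G i j x =
     (\<Sum>m\<in>UNIV. pd m (\<lambda>y. christoffel G m i j y) x - pd j (\<lambda>y. christoffel G m m i y) x)
   + (\<Sum>m\<in>UNIV. \<Sum>l\<in>UNIV. christoffel G m m l x * christoffel G l i j x
                          - christoffel G m j l x * christoffel G l m i x)"

definition scalar_curv :: "(real^'n \<Rightarrow> real^'n^'n) \<Rightarrow> real^'n::finite \<Rightarrow> real" where
  "scalar_curv G x = (\<Sum>i\<in>UNIV. \<Sum>j\<in>UNIV. matrix_inv (G x) $ i $ j * ricci G i j x)"

definition schouten :: "(real^'n \<Rightarrow> real^'n^'n) \<Rightarrow> real^'n::finite \<Rightarrow> real^'n^'n" where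
  "schouten G x = (\<chi> i j. (ricci G i j x
       - scalar_curv G x / (2 * (real CARD('n) - 1)) * G x $ i $ j) / (real CARD('n) - 2))"

text \<open>Eigenvalues (with multiplicity) of an endomorphism whose characteristic polynomial splits over R,
  and the k-th elementary symmetric function of them.\<close>
definition eigs :: "real^'n^'n \<Rightarrow> 'n::finite \<Rightarrow> real" where
  "eigs B = (SOME lam. \<forall>\<mu>. det (\<mu> *\<^sub>R mat 1 - B) = (\<Prod>i\<in>UNIV. \<mu> - lam i))"

definition sigma_k :: "nat \<Rightarrow> real^'n^'n \<Rightarrow> real" where
  "sigma_k k B = (\<Sum>S\<in>{S::'n::finite set. card S = k}. \<Prod>i\<in>S. eigs B i)"

text \<open>Cylinder metric dt^2 + d theta^2 on R x S^(n-1) in the chart (t,y): t = x $ i0, y = the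
  remaining n-1 coordinates, stereographic coordinates on the sphere (round metric 4|dy|^2/(1+|y|^2)^2).\<close>
definition cyl_metric :: "'n::finite \<Rightarrow> real^'n \<Rightarrow> real^'n^'n" where
  "cyl_metric i0 x = (\<chi> i j. if i = j then
       (if i = i0 then 1 else 4 / (1 + (\<Sum>l\<in>UNIV - {i0}. (x $ l)^2))^2) else 0)"

definition conf_metric :: "nat \<Rightarrow> 'n::finite \<Rightarrow> (real \<Rightarrow> real) \<Rightarrow> real^'n \<Rightarrow> real^'n^'n" where
  "conf_metric k i0 v x =
     (v (x $ i0) powr (4 * real k / (real CARD('n) - 2 * real k))) *\<^sub>R cyl_metric i0 x"

definition B_endo :: "nat \<Rightarrow> 'n::finite \<Rightarrow> (real \<Rightarrow> real) \<Rightarrow> real^'n \<Rightarrow> real^'n^'n" where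
  "B_endo k i0 v x =
     (((real CARD('n) - 2 * real k) / (2 * real k)) *
        v (x $ i0) powr (2 * real CARD('n) / (real CARD('n) - 2 * real k)))
     *\<^sub>R (matrix_inv (conf_metric k i0 v x) ** schouten (conf_metric k i0 v) x)"

definition smooth_real :: "(real \<Rightarrow> real) \<Rightarrow> bool" where
  "smooth_real v \<longleftrightarrow> (\<forall>m x. ((deriv ^^ m) v) differentiable (at x))"

end

theory Submission
  imports Defs
begin


lemma ray_nth: "(x + s *\<^sub>R axis l 1) $ j = x $ j + (if j = l then s else (0::real))"
  by (simp add: axis_def)

lemma pd_eqI: "((\<lambda>s. f (x + s *\<^sub>R axis l 1)) has_real_derivative D) (at 0) \<Longrightarrow> pd l f x = D"
  unfolding pd_def by (rule DERIV_imp_deriv)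

lemma pd_const: "pd l (\<lambda>y. c) x = 0"
  by (rule pd_eqI) simp

lemma matrix_inv_eqI:
  fixes A B :: "real^'n^'n"
  assumes "A ** B = mat 1" "B ** A = mat 1"
  shows "matrix_inv A = B"
proof -
  have ex: "\<exists>A'. A ** A' = mat 1 \<and> A' ** A = mat 1" using assms by blast
  define C where "C = matrix_inv A"
  have C: "A ** C = mat 1 \<and> C ** A = mat 1"
    unfolding C_def matrix_inv_def by (rule someI_ex[OF ex])
  have "C = C ** (A ** B)" using assms by simp
  also have "\<dots> = (C ** A) ** B" by (simp add: matrix_mul_assoc)
  also have "\<dots> = B" using C by simp
  finally show ?thesis unfolding C_def .
qed

lemma if0_mult: "(if P then a else (0::real)) * b = (if P then a * b else 0)"
  "b * (if P then a else (0::real)) = (if P then b * a else 0)" by auto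

lemma neg_if0: "- (if P then a else (0::real)) = (if P then - a else 0)" by auto

lemma sum_if_out: "(\<Sum>l\<in>A. if P then f l else 0) = (if P then (\<Sum>l\<in>A. f l) else (0::real))"
  by auto

lemma aux_Raa: "(u::real) > 0 \<Longrightarrow> 8*(u-1)/u^2 + (2*((4/u^2)*(a*a)) + (c*(p*p) + ((c*2-2)/u + (-(c*(a*((4/u^2)*a))) - c*(4*(u-1))/u^2 - c*(p*p - 2/u))))) - 6/u
   = (4/u^2)*c + ((4/u^2)*(2*a^2) - (4/u^2)*(c*a^2) - (4/u^2)*2)"
  by (simp add: field_simps power2_eq_square)

lemma matrix_inv_diag:
  fixes d :: "'n::finite \<Rightarrow> real"
  assumes "\<And>i. d i \<noteq> 0"
  shows "matrix_inv (\<chi> i j. if i = j then d i else 0) = (\<chi> i j. if i = j then 1 / d i else 0)"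
  apply (rule matrix_inv_eqI)
  using assms by (auto simp: matrix_matrix_mult_def mat_def vec_eq_iff if0_mult)

lemma d_coord: "((\<lambda>s. (x + s *\<^sub>R axis l 1) $ j) has_real_derivative (if j = l then 1 else 0)) (at s0)"
  by (cases "j = l") (auto simp: ray_nth axis_def intro!: derivative_eq_intros)

lemma d_g:
  assumes "g differentiable (at (x $ j))"
  shows "((\<lambda>s. g ((x + s *\<^sub>R axis l 1) $ j)) has_real_derivative
     (if j = l then deriv g (x $ j) else 0)) (at 0)"
proof -
  have "(g has_real_derivative deriv g ((x + 0 *\<^sub>R axis l 1) $ j)) (at ((x + 0 *\<^sub>R axis l 1) $ j))"
    using assms by (simp add: DERIV_deriv_iff_real_differentiable)
  from DERIV_chain2[OF this d_coord[of x l j 0]] show ?thesis by (cases "j = l") (simp_all add: axis_def)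
qed

lemma pd_g: "g differentiable (at (x $ j)) \<Longrightarrow> pd l (\<lambda>y. g (y $ j)) x = (if j = l then deriv g (x $ j) else 0)"
  by (rule pd_eqI, rule d_g)

locale dm =
  fixes i0 :: "'n::finite" and P :: "real \<Rightarrow> real"
  assumes Ppos: "\<And>t. P t > 0"
    and Pd: "\<And>t. P differentiable (at t)"
    and Pdd: "\<And>t. deriv P differentiable (at t)"
begin

definition S :: "real^'n \<Rightarrow> real" where "S x = (\<Sum>l\<in>UNIV - {i0}. (x $ l)^2)"
definition Q :: "real^'n \<Rightarrow> real" where "Q x = 4 / (1 + S x)^2"
definition phi :: "'n \<Rightarrow> real^'n \<Rightarrow> real" where "phi i x = - 2 * x $ i / (1 + S x)"
definition al :: "real \<Rightarrow> real" where "al t = deriv P t / (2 * P t)"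
definition dal :: "real \<Rightarrow> real" where "dal t = deriv al t"
definition F :: "'n \<Rightarrow> real^'n \<Rightarrow> real" where
  "F j x = (if j = i0 then P (x $ i0) else P (x $ i0) * Q x)"
definition Gm :: "real^'n \<Rightarrow> real^'n^'n" where
  "Gm x = (\<chi> i j. if i = j then F i x else 0)"

lemma S_nonneg: "S x \<ge> 0" unfolding S_def by (simp add: sum_nonneg)
lemma Q_pos: "Q x > 0" unfolding Q_def using S_nonneg[of x] by simp
lemma F_pos: "F j x > 0" unfolding F_def using Q_pos Ppos by simp

lemma al_diff: "al differentiable (at t)"
  unfolding al_def[abs_def] using Pd Pdd Ppos[of t]
  by (intro derivative_intros) auto

lemma d_S: "((\<lambda>s. S (x + s *\<^sub>R axis l 1)) has_real_derivative (if l = i0 then 0 else 2 * x $ l)) (at 0)"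
proof -
  have "((\<lambda>s. \<Sum>j\<in>UNIV - {i0}. ((x + s *\<^sub>R axis l 1) $ j)^2) has_real_derivative
     (\<Sum>j\<in>UNIV - {i0}. of_nat 2 * ((if j = l then 1 else 0) * ((x + 0 *\<^sub>R axis l 1) $ j) ^ (2 - Suc 0)))) (at 0)"
    by (intro DERIV_sum DERIV_power d_coord)
  moreover have "(\<Sum>j\<in>UNIV - {i0}. of_nat 2 * ((if j = l then 1 else 0) * ((x + 0 *\<^sub>R axis l 1) $ j) ^ (2 - Suc 0)))
     = (if l = i0 then 0 else 2 * x $ l)"
    by (simp add: if0_mult)
  ultimately show ?thesis unfolding S_def by simp
qed

lemma d_Q: "((\<lambda>s. Q (x + s *\<^sub>R axis l 1)) has_real_derivative (if l = i0 then 0 else 2 * Q x * phi l x)) (at 0)"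
proof -
  define u where "u = 1 + S x"
  have pos: "u > 0" using S_nonneg[of x] by (simp add: u_def)
  define Dl where "Dl = (if l = i0 then 0 else 2 * x $ l)"
  have d1: "((\<lambda>s. (1 + S (x + s *\<^sub>R axis l 1))^2) has_real_derivative 2 * Dl * u) (at 0)"
    by (rule DERIV_cong[OF DERIV_power[OF DERIV_add[OF DERIV_const d_S]]]) (simp add: Dl_def u_def)
  have d2: "((\<lambda>s. 4 / (1 + S (x + s *\<^sub>R axis l 1))^2) has_real_derivative (0 * u^2 - 4 * (2 * Dl * u)) / (u^2 * u^2)) (at 0)"
    using DERIV_divide[OF DERIV_const d1, of 4] pos by (simp add: u_def)
  have e: "(0 * u^2 - 4 * (2 * Dl * u)) / (u^2 * u^2) = (if l = i0 then 0 else 2 * Q x * phi l x)"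
    using pos by (cases "l = i0") (simp_all add: Dl_def Q_def phi_def u_def[symmetric] field_simps power2_eq_square power3_eq_cube)
  show ?thesis using DERIV_cong[OF d2 e] unfolding Q_def[symmetric] .
qed

definition dphi :: "'n \<Rightarrow> 'n \<Rightarrow> real^'n \<Rightarrow> real" where
  "dphi l i x = (if l = i0 then 0 else (if i = l then - 2 / (1 + S x) else 0) + phi i x * phi l x)"

lemma d_phi: assumes "i \<noteq> i0"
  shows "((\<lambda>s. phi i (x + s *\<^sub>R axis l 1)) has_real_derivative dphi l i x) (at 0)"
proof -
  have pos: "1 + S x > 0" using S_nonneg[of x] by simp
  note d = DERIV_divide[OF DERIV_cmult[OF d_coord] DERIV_add[OF DERIV_const d_S]]
  have "((\<lambda>s. - 2 * (x + s *\<^sub>R axis l 1) $ i / (1 + S (x + s *\<^sub>R axis l 1))) has_real_derivative dphi l i x) (at 0)"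
    apply (rule DERIV_cong[OF d])
    using pos assms by (auto simp: dphi_def phi_def divide_simps)
  then show ?thesis unfolding phi_def by simp
qed

lemma pd_phi: "i \<noteq> i0 \<Longrightarrow> pd l (phi i) x = dphi l i x"
  by (rule pd_eqI, rule d_phi)

lemma pd_al: "pd l (\<lambda>y. al (y $ i0)) x = (if l = i0 then dal (x $ i0) else 0)"
  using pd_g[where g=al and j=i0 and l=l and x=x, OF al_diff] by (auto simp: dal_def)

lemma pd_Qal: "pd l (\<lambda>y. Q y * al (y $ i0)) x
   = (if l = i0 then Q x * dal (x $ i0) else 2 * Q x * phi l x * al (x $ i0))"
proof -
  have "((\<lambda>s. Q (x + s *\<^sub>R axis l 1) * al ((x + s *\<^sub>R axis l 1) $ i0)) has_real_derivative
     (if l = i0 then 0 else 2 * Q x * phi l x) * al ((x + 0 *\<^sub>R axis l 1) $ i0)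
      + (if i0 = l then deriv al (x $ i0) else 0) * Q (x + 0 *\<^sub>R axis l 1)) (at 0)"
    by (intro DERIV_mult d_Q d_g al_diff)
  then show ?thesis by (intro pd_eqI) (auto simp: dal_def mult.commute)
qed

definition dF :: "'n \<Rightarrow> 'n \<Rightarrow> real^'n \<Rightarrow> real" where
  "dF l j x = (if j = i0 then (if l = i0 then deriv P (x $ i0) else 0)
     else (if l = i0 then deriv P (x $ i0) * Q x else P (x $ i0) * (2 * Q x * phi l x)))"

lemma pd_F: "pd l (F j) x = dF l j x"
proof (cases "j = i0")
  case True
  have "F j = (\<lambda>y. P (y $ i0))" using True by (auto simp: F_def)
  then show ?thesis using pd_g[where g=P and j=i0 and l=l and x=x, OF Pd] True by (auto simp: dF_def)
next
  case False
  have e: "F j = (\<lambda>y. P (y $ i0) * Q y)" using False by (auto simp: F_def)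
  have "((\<lambda>s. P ((x + s *\<^sub>R axis l 1) $ i0) * Q (x + s *\<^sub>R axis l 1)) has_real_derivative
     (if i0 = l then deriv P (x $ i0) else 0) * Q (x + 0 *\<^sub>R axis l 1)
      + (if l = i0 then 0 else 2 * Q x * phi l x) * P ((x + 0 *\<^sub>R axis l 1) $ i0)) (at 0)"
    by (intro DERIV_mult d_Q d_g Pd)
  then show ?thesis unfolding e using False by (intro pd_eqI) (auto simp: dF_def mult.commute)
qed

lemma pd_if: "pd l (\<lambda>y. if b then f y else g y) x = (if b then pd l f x else pd l g x)"
  by (cases b) simp_all

lemma inv_Gm: "matrix_inv (Gm x) = (\<chi> i j. if i = j then 1 / F i x else 0)"
  unfolding Gm_def by (rule matrix_inv_diag) (use F_pos in \<open>simp add: less_imp_neq[symmetric]\<close>)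

lemma pd_Gm: "pd l (\<lambda>y. Gm y $ i $ j) x = (if i = j then dF l i x else 0)"
proof (cases "i = j")
  case True
  have "(\<lambda>y. Gm y $ i $ j) = F i" using True by (auto simp: Gm_def)
  then show ?thesis using True pd_F by simp
next
  case False
  have "(\<lambda>y. Gm y $ i $ j) = (\<lambda>y. 0)" using False by (auto simp: Gm_def)
  then show ?thesis using False pd_const by simp
qed

lemma chr_raw: "christoffel Gm m i j x = (1/2) * (1 / F m x) *
   ((if j = m then dF i m x else 0) + (if i = m then dF j m x else 0) - (if i = j then dF m i x else 0))"
  unfolding christoffel_def inv_Gm pd_Gm by (simp add: if0_mult)

definition Gam :: "'n \<Rightarrow> 'n \<Rightarrow> 'n \<Rightarrow> real^'n \<Rightarrow> real" where
  "Gam m i j x = (if m = i0 then (if i = i0 \<and> j = i0 then al (x $ i0)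
        else if i \<noteq> i0 \<and> i = j then - (Q x * al (x $ i0)) else 0)
     else if i = i0 then (if j = m then al (x $ i0) else 0)
     else if j = i0 then (if i = m then al (x $ i0) else 0)
     else (if j = m then phi i x else 0) + (if i = m then phi j x else 0) - (if i = j then phi m x else 0))"

lemma chr: "christoffel Gm m i j x = Gam m i j x"
  unfolding chr_raw Gam_def dF_def al_def using F_pos[of m x] Ppos[of "x $ i0"] Q_pos[of x]
  by (auto simp: F_def field_simps)

lemma d_phi': "i \<noteq> i0 \<Longrightarrow> ((\<lambda>s. if b then phi i (x + s *\<^sub>R axis l 1) else 0) has_real_derivative (if b then dphi l i x else 0)) (at 0)"
  by (cases b) (simp_all add: d_phi)

lemma pd_phi3: assumes "i \<noteq> i0" "j \<noteq> i0" "m \<noteq> i0"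
  shows "pd l (\<lambda>y. (if j = m then phi i y else 0) + (if i = m then phi j y else 0) - (if i = j then phi m y else 0)) x
    = (if j = m then dphi l i x else 0) + (if i = m then dphi l j x else 0) - (if i = j then dphi l m x else 0)"
  by (rule pd_eqI, rule DERIV_diff[OF DERIV_add[OF d_phi' d_phi'] d_phi']) (use assms in auto)

lemma pd_nQal: "pd l (\<lambda>y. - (Q y * al (y $ i0))) x
   = - (if l = i0 then Q x * dal (x $ i0) else 2 * Q x * phi l x * al (x $ i0))"
proof -
  have "((\<lambda>s. Q (x + s *\<^sub>R axis l 1) * al ((x + s *\<^sub>R axis l 1) $ i0)) has_real_derivative
     (if l = i0 then 0 else 2 * Q x * phi l x) * al ((x + 0 *\<^sub>R axis l 1) $ i0)
      + (if i0 = l then deriv al (x $ i0) else 0) * Q (x + 0 *\<^sub>R axis l 1)) (at 0)"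
    by (intro DERIV_mult d_Q d_g al_diff)
  from DERIV_minus[OF this] show ?thesis by (intro pd_eqI) (auto simp: dal_def mult.commute)
qed

definition dGam :: "'n \<Rightarrow> 'n \<Rightarrow> 'n \<Rightarrow> 'n \<Rightarrow> real^'n \<Rightarrow> real" where
  "dGam l m i j x = (if m = i0 then (if i = i0 \<and> j = i0 then (if l = i0 then dal (x $ i0) else 0)
        else if i \<noteq> i0 \<and> i = j then - (if l = i0 then Q x * dal (x $ i0) else 2 * Q x * phi l x * al (x $ i0)) else 0)
     else if i = i0 then (if j = m then (if l = i0 then dal (x $ i0) else 0) else 0)
     else if j = i0 then (if i = m then (if l = i0 then dal (x $ i0) else 0) else 0)
     else (if j = m then dphi l i x else 0) + (if i = m then dphi l j x else 0) - (if i = j then dphi l m x else 0))"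

lemma pd_Gam: "pd l (\<lambda>y. Gam m i j y) x = dGam l m i j x"
  unfolding Gam_def dGam_def
  by (cases "m = i0"; cases "i = i0"; cases "j = i0")
     (simp_all add: pd_if pd_al pd_const pd_nQal pd_phi3)

lemma sum_split: "(\<Sum>m\<in>UNIV. f m) = f i0 + (\<Sum>m\<in>UNIV - {i0}. f m)"
  by (simp add: sum.remove)

lemma ricci_eq: "ricci Gm i j x = (\<Sum>m\<in>UNIV. dGam m m i j x - dGam j m m i x)
   + (\<Sum>m\<in>UNIV. \<Sum>l\<in>UNIV. Gam m m l x * Gam l i j x - Gam m j l x * Gam l m i x)"
  unfolding ricci_def chr pd_Gam ..

lemma R00: "ricci Gm i0 i0 x = - (real CARD('n) - 1) * dal (x $ i0)"
  unfolding ricci_eq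
  apply (simp add: sum_split)
  apply (simp add: dGam_def Gam_def if0_mult neg_if0 algebra_simps sum.distrib cong: if_cong)
  done


lemmas ssimps = ring_distribs sum.distrib sum_subtractf sum_negf sum_if_out sum.delta sum.delta' if0_mult neg_if0

lemma card_Y: "real (card (UNIV - {i0})) = real CARD('n) - 1"
  by (simp add: card_Diff_singleton of_nat_diff card_ge_0_finite Suc_le_eq)

lemma sum_phi2: "(\<Sum>l\<in>UNIV - {i0}. phi l x * phi l x) = 4 * S x / (1 + S x)^2"
proof -
  have pos: "1 + S x > 0" using S_nonneg[of x] by simp
  have "\<And>l. phi l x * phi l x = (4 / (1 + S x)^2) * (x $ l)^2"
    using pos by (simp add: phi_def power2_eq_square field_simps)
  then have "(\<Sum>l\<in>UNIV - {i0}. phi l x * phi l x) = (4 / (1 + S x)^2) * S x"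
    by (simp add: S_def sum_distrib_left)
  then show ?thesis by simp
qed

lemma R0a: "j \<noteq> i0 \<Longrightarrow> ricci Gm i0 j x = 0"
  unfolding ricci_eq
  apply (simp add: sum_split)
  apply (simp add: dGam_def Gam_def ssimps cong: if_cong)
  done

lemma Ra0: "i \<noteq> i0 \<Longrightarrow> ricci Gm i i0 x = 0"
  unfolding ricci_eq
  apply (simp add: sum_split)
  apply (simp add: dGam_def Gam_def ssimps cong: if_cong)
  apply (simp add: dphi_def)
  done

lemma Raa: "i \<noteq> i0 \<Longrightarrow> ricci Gm i i x = Q x * ((real CARD('n) - 2) * (1 - al (x $ i0)^2) - dal (x $ i0))"
  unfolding ricci_eq
  apply (simp add: sum_split)
  apply (simp add: dGam_def Gam_def ssimps cong: if_cong)
  apply (simp add: dphi_def sum_subtractf sum_phi2 card_Y)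
  using aux_Raa[of "1 + S x" "al (x $ i0)" "real CARD('n)" "phi i x"] S_nonneg[of x]
  apply (simp add: Q_def)
  done

lemma Rab: "i \<noteq> i0 \<Longrightarrow> j \<noteq> i0 \<Longrightarrow> i \<noteq> j \<Longrightarrow> ricci Gm i j x = 0"
  unfolding ricci_eq
  apply (simp add: sum_split)
  apply (simp add: dGam_def Gam_def ssimps cong: if_cong)
  apply (simp add: dphi_def)
  done

lemma ricci_closed: "ricci Gm i j x = (if i = j then (if i = i0 then - (real CARD('n) - 1) * dal (x $ i0)
    else Q x * ((real CARD('n) - 2) * (1 - al (x $ i0)^2) - dal (x $ i0))) else 0)"
  using R00 R0a Ra0 Raa Rab by (cases "i = i0"; cases "j = i0") auto

lemma scal: "scalar_curv Gm x = (real CARD('n) - 1) * ((real CARD('n) - 2) * (1 - al (x $ i0)^2) - 2 * dal (x $ i0)) / P (x $ i0)"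
proof -
  have "scalar_curv Gm x = (\<Sum>i\<in>UNIV. ricci Gm i i x / F i x)"
    unfolding scalar_curv_def inv_Gm by (simp add: if0_mult)
  also have "\<dots> = - (real CARD('n) - 1) * dal (x $ i0) / P (x $ i0)
     + (\<Sum>i\<in>UNIV - {i0}. ((real CARD('n) - 2) * (1 - al (x $ i0)^2) - dal (x $ i0)) / P (x $ i0))"
    using Q_pos[of x] by (simp add: sum_split ricci_closed F_def)
  also have "\<dots> = (real CARD('n) - 1) * ((real CARD('n) - 2) * (1 - al (x $ i0)^2) - 2 * dal (x $ i0)) / P (x $ i0)"
    using card_Y Ppos[of "x $ i0"] by (simp add: field_simps)
  finally show ?thesis .
qed

lemma aux_s0: "(c::real) - 1 \<noteq> 0 \<Longrightarrow> c - 2 \<noteq> 0 \<Longrightarrow> p > 0 \<Longrightarrow>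
  (- (c - 1) * d - (c - 1) * ((c - 2) * (1 - a^2) - 2 * d) / p / (2 * (c - 1)) * p) / (c - 2) = - d - (1 - a^2) / 2"
proof -
  assume h: "c - 1 \<noteq> 0" "c - 2 \<noteq> 0" "p > 0"
  have e: "(c - 1) * ((c - 2) * (1 - a^2) - 2 * d) / p / (2 * (c - 1)) * p = ((c - 2) * (1 - a^2) - 2 * d) / 2"
    using h by (simp add: field_simps)
  have "(- (c - 1) * d - (c - 1) * ((c - 2) * (1 - a^2) - 2 * d) / p / (2 * (c - 1)) * p) / (c - 2)
     = (- (c - 1) * d - ((c - 2) * (1 - a^2) - 2 * d) / 2) / (c - 2)" by (simp only: e)
  also have "\<dots> = - d - (1 - a^2) / 2" using h by (simp add: field_simps)
  finally show ?thesis .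
qed

lemma aux_sa: "(c::real) - 1 \<noteq> 0 \<Longrightarrow> c - 2 \<noteq> 0 \<Longrightarrow> p > 0 \<Longrightarrow>
  (q * ((c - 2) * (1 - a^2) - d) - (c - 1) * ((c - 2) * (1 - a^2) - 2 * d) / p / (2 * (c - 1)) * (p * q)) / (c - 2) = q * (1 - a^2) / 2"
proof -
  assume h: "c - 1 \<noteq> 0" "c - 2 \<noteq> 0" "p > 0"
  have e: "(c - 1) * ((c - 2) * (1 - a^2) - 2 * d) / p / (2 * (c - 1)) * (p * q) = ((c - 2) * (1 - a^2) - 2 * d) * q / 2"
    using h by (simp add: field_simps)
  have "(q * ((c - 2) * (1 - a^2) - d) - (c - 1) * ((c - 2) * (1 - a^2) - 2 * d) / p / (2 * (c - 1)) * (p * q)) / (c - 2)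
     = (q * ((c - 2) * (1 - a^2) - d) - ((c - 2) * (1 - a^2) - 2 * d) * q / 2) / (c - 2)" by (simp only: e)
  also have "\<dots> = q * (1 - a^2) / 2" using h by (simp add: field_simps)
  finally show ?thesis .
qed

lemma schouten_closed: assumes "CARD('n) > 2"
  shows "schouten Gm x = (\<chi> i j. if i = j then (if i = i0 then - dal (x $ i0) - (1 - al (x $ i0)^2) / 2
     else Q x * (1 - al (x $ i0)^2) / 2) else 0)"
proof -
  have c: "real CARD('n) - 1 \<noteq> 0" "real CARD('n) - 2 \<noteq> 0" using assms by auto
  have e: "schouten Gm x $ i $ j = (ricci Gm i j x - scalar_curv Gm x / (2 * (real CARD('n) - 1)) * Gm x $ i $ j) / (real CARD('n) - 2)" for i j
    by (simp add: schouten_def)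
  show ?thesis
    unfolding vec_eq_iff
  proof (intro allI)
    fix i j
    show "schouten Gm x $ i $ j = (\<chi> i j. if i = j then (if i = i0 then - dal (x $ i0) - (1 - al (x $ i0)^2) / 2
     else Q x * (1 - al (x $ i0)^2) / 2) else 0) $ i $ j"
      unfolding e ricci_closed scal
      using aux_s0[OF c Ppos[of "x $ i0"], of "dal (x $ i0)" "al (x $ i0)"]
        aux_sa[OF c Ppos[of "x $ i0"], of "Q x" "al (x $ i0)" "dal (x $ i0)"]
      by (auto simp: Gm_def F_def)
  qed
qed

lemma B_closed: assumes "CARD('n) > 2"
  shows "K *\<^sub>R (matrix_inv (Gm x) ** schouten Gm x) = (\<chi> i j. if i = j then (if i = i0 then K * (- dal (x $ i0) - (1 - al (x $ i0)^2) / 2) / P (x $ i0)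
     else K * (1 - al (x $ i0)^2) / (2 * P (x $ i0))) else 0)"
  unfolding inv_Gm schouten_closed[OF assms] vec_eq_iff matrix_matrix_mult_def
  using Q_pos[of x] Ppos[of "x $ i0"] by (auto simp: if0_mult F_def)

end




definition esf :: "nat \<Rightarrow> ('n::finite \<Rightarrow> real) \<Rightarrow> real" where
  "esf k a = (\<Sum>S\<in>{S::'n set. card S = k}. \<Prod>i\<in>S. a i)"

lemma prod_expand: "(\<Prod>i\<in>(UNIV::'n::finite set). 1 + z * a i) = (\<Sum>k\<le>CARD('n). esf k a * z^k)"
proof -
  have "(\<Prod>i\<in>(UNIV::'n set). z * a i + 1) = (\<Sum>X\<in>Pow UNIV. (\<Prod>i\<in>X. z * a i) * (\<Prod>i\<in>UNIV - X. 1))"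
    by (rule prod_add) simp
  also have "\<dots> = (\<Sum>X\<in>Pow UNIV. z ^ card X * (\<Prod>i\<in>X. a i))"
    by (simp add: prod.distrib)
  also have "\<dots> = (\<Sum>k\<in>{..CARD('n)}. \<Sum>X\<in>{X. X \<in> Pow UNIV \<and> card X = k}. z ^ card X * (\<Prod>i\<in>X. a i))"
    by (rule sum.group[symmetric]) (auto simp: card_mono)
  also have "\<dots> = (\<Sum>k\<le>CARD('n). esf k a * z^k)"
  proof (rule sum.cong)
    fix k
    have "(\<Sum>X\<in>{X. X \<in> Pow UNIV \<and> card X = k}. z ^ card X * (\<Prod>i\<in>X. a i))
       = (\<Sum>X\<in>{S::'n set. card S = k}. z ^ k * (\<Prod>i\<in>X. a i))"
      by (rule sum.cong) auto
    also have "\<dots> = esf k a * z^k" by (simp add: esf_def sum_distrib_left mult.commute)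
    finally show "(\<Sum>X\<in>{X. X \<in> Pow UNIV \<and> card X = k}. z ^ card X * (\<Prod>i\<in>X. a i)) = esf k a * z^k" .
  qed simp
  finally show ?thesis by (simp add: add.commute)
qed

lemma esf_eq:
  fixes a b :: "'n::finite \<Rightarrow> real"
  assumes "\<forall>\<mu>. (\<Prod>i\<in>UNIV. \<mu> - a i) = (\<Prod>i\<in>UNIV. \<mu> - b i)" and "k \<le> CARD('n)"
  shows "esf k a = esf k b"
proof -
  have "(\<Prod>i\<in>(UNIV::'n set). 1 + z * a i) = (\<Prod>i\<in>UNIV. 1 + z * b i)" for z
  proof (cases "z = 0")
    case True then show ?thesis by simp
  next
    case False
    have e: "(\<Prod>i\<in>(UNIV::'n set). 1 + z * c i) = (- z) ^ CARD('n) * (\<Prod>i\<in>UNIV. (- 1 / z) - c i)" for c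
    proof -
      have "(\<Prod>i\<in>(UNIV::'n set). 1 + z * c i) = (\<Prod>i\<in>UNIV. (- z) * ((- 1 / z) - c i))"
        using False by (intro prod.cong) (auto simp: field_simps)
      also have "\<dots> = (- z) ^ CARD('n) * (\<Prod>i\<in>UNIV. (- 1 / z) - c i)"
        unfolding prod.distrib by simp
      finally show ?thesis .
    qed
    show ?thesis unfolding e using assms(1) by simp
  qed
  then have "\<forall>z. (\<Sum>k\<le>CARD('n). esf k a * z^k) = (\<Sum>k\<le>CARD('n). esf k b * z^k)"
    by (simp add: prod_expand)
  then have "\<forall>i\<le>CARD('n). esf i a = esf i b"
    using polyfun_eq_coeffs[where c="\<lambda>k. esf k a" and d="\<lambda>k. esf k b" and n="CARD('n)"] by blast
  then show ?thesis using assms(2) by blast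
qed

lemma sigma_k_diag:
  fixes d :: "'n::finite \<Rightarrow> real"
  assumes "k \<le> CARD('n)"
  shows "sigma_k k (\<chi> i j. if i = j then d i else 0) = esf k d"
proof -
  let ?B = "(\<chi> i j. if i = j then d i else 0) :: real^'n^'n"
  have w: "\<forall>\<mu>. det (\<mu> *\<^sub>R mat 1 - ?B) = (\<Prod>i\<in>UNIV. \<mu> - d i)"
  proof
    fix \<mu> :: real
    have "det (\<mu> *\<^sub>R mat 1 - ?B) = (\<Prod>i\<in>UNIV. (\<mu> *\<^sub>R mat 1 - ?B) $ i $ i)"
      by (rule det_diagonal) (simp add: mat_def)
    then show "det (\<mu> *\<^sub>R mat 1 - ?B) = (\<Prod>i\<in>UNIV. \<mu> - d i)" by (simp add: mat_def)
  qed
  have ex: "\<exists>lam::'n \<Rightarrow> real. \<forall>\<mu>. det (\<mu> *\<^sub>R mat 1 - ?B) = (\<Prod>i\<in>UNIV. \<mu> - lam i)"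
    apply (rule exI[where x=d]) using w by simp
  have "\<forall>\<mu>. det (\<mu> *\<^sub>R mat 1 - ?B) = (\<Prod>i\<in>UNIV. \<mu> - eigs ?B i)"
    unfolding eigs_def by (rule someI_ex[OF ex])
  then have "\<forall>\<mu>. (\<Prod>i\<in>UNIV. \<mu> - eigs ?B i) = (\<Prod>i\<in>UNIV. \<mu> - d i)" using w by simp
  then have "esf k (eigs ?B) = esf k d" using esf_eq assms by blast
  then show ?thesis by (simp add: sigma_k_def esf_def)
qed

lemma esf_two:
  fixes i0 :: "'n::finite"
  assumes "k \<ge> 1"
  shows "esf k (\<lambda>i. if i = i0 then L1 else L2)
     = real ((CARD('n) - 1) choose k) * L2^k + real ((CARD('n) - 1) choose (k - 1)) * L1 * L2^(k - 1)"
proof -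
  let ?d = "\<lambda>i. if i = i0 then L1 else L2"
  let ?Y = "UNIV - {i0}"
  define A1 where "A1 = {S::'n set. card S = k \<and> i0 \<notin> S}"
  define A2 where "A2 = {S::'n set. card S = k \<and> i0 \<in> S}"
  have split: "{S::'n set. card S = k} = A1 \<union> A2" "A1 \<inter> A2 = {}" by (auto simp: A1_def A2_def)
  have s1: "(\<Sum>S\<in>A1. \<Prod>i\<in>S. ?d i) = real (card A1) * L2^k"
  proof -
    have "(\<Prod>i\<in>S. ?d i) = L2^k" if "S \<in> A1" for S
    proof -
      have "(\<Prod>i\<in>S. ?d i) = (\<Prod>i\<in>S. L2)" using that by (intro prod.cong) (auto simp: A1_def)
      then show ?thesis using that by (simp add: A1_def)
    qed
    then show ?thesis by simp
  qed
  have c1: "card A1 = (CARD('n) - 1) choose k"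
  proof -
    have "A1 = {B. B \<subseteq> ?Y \<and> card B = k}" by (auto simp: A1_def)
    then show ?thesis by (simp add: n_subsets card_Diff_singleton)
  qed
  have s2: "(\<Sum>S\<in>A2. \<Prod>i\<in>S. ?d i) = real (card A2) * (L1 * L2^(k - 1))"
  proof -
    have "(\<Prod>i\<in>S. ?d i) = L1 * L2^(k - 1)" if "S \<in> A2" for S
    proof -
      have fin: "finite S" by simp
      have i0S: "i0 \<in> S" and cS: "card S = k" using that by (auto simp: A2_def)
      have "(\<Prod>i\<in>S. ?d i) = ?d i0 * (\<Prod>i\<in>S - {i0}. ?d i)" using prod.remove[OF fin i0S] .
      also have "(\<Prod>i\<in>S - {i0}. ?d i) = (\<Prod>i\<in>S - {i0}. L2)" by (intro prod.cong) auto
      also have "\<dots> = L2^(k - 1)" using cS i0S by (simp add: card_Diff_singleton)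
      finally show ?thesis by simp
    qed
    then show ?thesis by simp
  qed
  have c2: "card A2 = (CARD('n) - 1) choose (k - 1)"
  proof -
    have "bij_betw (\<lambda>T. insert i0 T) {B. B \<subseteq> ?Y \<and> card B = k - 1} A2"
    proof (rule bij_betwI[where g = "\<lambda>S. S - {i0}"])
      show "(\<lambda>T. insert i0 T) \<in> {B. B \<subseteq> ?Y \<and> card B = k - 1} \<rightarrow> A2"
        using assms by (auto simp: A2_def card_insert_if finite_subset)
      show "(\<lambda>S. S - {i0}) \<in> A2 \<rightarrow> {B. B \<subseteq> ?Y \<and> card B = k - 1}"
        by (auto simp: A2_def card_Diff_singleton)
      show "\<And>T. T \<in> {B. B \<subseteq> ?Y \<and> card B = k - 1} \<Longrightarrow> insert i0 T - {i0} = T" by blast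
      show "\<And>S. S \<in> A2 \<Longrightarrow> insert i0 (S - {i0}) = S" unfolding A2_def by blast
    qed
    then have "card A2 = card {B. B \<subseteq> ?Y \<and> card B = k - 1}" by (simp add: bij_betw_same_card)
    then show ?thesis by (simp add: n_subsets card_Diff_singleton)
  qed
  have "esf k ?d = (\<Sum>S\<in>A1. \<Prod>i\<in>S. ?d i) + (\<Sum>S\<in>A2. \<Prod>i\<in>S. ?d i)"
    unfolding esf_def split(1) by (rule sum.union_disjoint) (auto simp: split(2))
  also have "\<dots> = real ((CARD('n) - 1) choose k) * L2^k + real ((CARD('n) - 1) choose (k - 1)) * L1 * L2^(k - 1)"
    unfolding s1 s2 c1 c2 by (simp only: mult.assoc)
  finally show ?thesis .
qed




lemma aux_sig:
  fixes kk nn aa bb c1 c2 V D D2 :: real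
  assumes kp: "kk > 0" and ab: "aa * bb = 1" and bbd: "bb = (nn - 2*kk)/(2*kk)" and cc: "kk * c2 = (nn - kk) * c1"
  shows "c2 * (bb*(V^2 - aa^2*D^2)/2) + c1 * (bb*(-aa*(D2*V - D*D) - (V^2 - aa^2*D^2)/2)) = c1 * (bb*bb*V*(V - aa^2*D2))"
proof -
  have nn: "nn = 2*kk*(bb+1)" using bbd kp by (simp add: field_simps)
  have "kk * c2 = kk * ((2*bb+1)*c1)" using cc nn by (simp add: algebra_simps)
  then have c2: "c2 = (2*bb+1)*c1" using kp by simp
  have "c2 * (bb*(V^2 - aa^2*D^2)/2) + c1 * (bb*(-aa*(D2*V - D*D) - (V^2 - aa^2*D^2)/2)) - c1 * (bb*bb*V*(V - aa^2*D2))
     = c1*bb*aa*(aa*bb - 1)*(D2*V - D*D)"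
    unfolding c2 by (simp add: field_simps power2_eq_square)
  then show ?thesis using ab by simp
qed

context
  fixes v :: "real \<Rightarrow> real" and k :: nat and i0 :: "'n::finite"
  assumes k1: "1 \<le> k" and kn: "2 * k < CARD('n)" and vpos: "\<And>t. v t > 0" and sm: "smooth_real v"
begin

definition "ee = 4 * real k / (real CARD('n) - 2 * real k)"
definition "aa = 2 * real k / (real CARD('n) - 2 * real k)"
definition "bb = (real CARD('n) - 2 * real k) / (2 * real k)"
definition "PP t = v t powr ee"

lemma nk_pos: "real CARD('n) - 2 * real k > 0" using kn by linarith
lemma k_pos: "real k > 0" using k1 by simp
lemma ab: "aa * bb = 1" using nk_pos k_pos by (simp add: aa_def bb_def)
lemma ee_aa: "ee = 2 * aa" by (simp add: ee_def aa_def)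

lemma v_diff: "v differentiable (at t)"
  using sm[unfolded smooth_real_def, rule_format, of 0 t] by simp
lemma dv_diff: "deriv v differentiable (at t)"
  using sm[unfolded smooth_real_def, rule_format, of 1 t] by simp
lemma dv: "(v has_real_derivative deriv v t) (at t)"
  using v_diff by (simp add: DERIV_deriv_iff_real_differentiable)
lemma ddv: "(deriv v has_real_derivative deriv (deriv v) t) (at t)"
  using dv_diff by (simp add: DERIV_deriv_iff_real_differentiable)

lemma dPP: "(PP has_real_derivative ee * deriv v t * PP t / v t) (at t)"
  unfolding PP_def[abs_def]
  by (rule DERIV_cong[OF DERIV_powr[OF dv vpos DERIV_const]]) (use vpos[of t] in \<open>simp add: field_simps\<close>)

lemma deriv_PP: "deriv PP = (\<lambda>t. ee * deriv v t * PP t / v t)"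
  using dPP by (intro ext DERIV_imp_deriv)

lemma PP_pos: "PP t > 0" using vpos[of t] by (simp add: PP_def)

lemma PP_diff: "PP differentiable (at t)"
  using dPP real_differentiable_def by blast

lemma dm_PP: "dm PP"
proof
  show "\<And>t. PP t > 0" by (rule PP_pos)
  show "\<And>t. PP differentiable (at t)" by (rule PP_diff)
  show "\<And>t. deriv PP differentiable (at t)"
    unfolding deriv_PP using PP_diff dv_diff v_diff vpos
    by (intro derivative_intros) (auto simp: less_imp_neq[symmetric])
qed

lemma al_eq: "dm.al PP t = aa * deriv v t / v t"
  using dm.al_def[OF dm_PP] deriv_PP PP_pos[of t] vpos[of t] by (simp add: ee_aa field_simps)

lemma dal_eq: "dm.dal PP t = aa * (deriv (deriv v) t * v t - deriv v t * deriv v t) / (v t * v t)"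
proof -
  have e: "dm.al PP = (\<lambda>t. aa * deriv v t / v t)" using al_eq by (intro ext)
  have "((\<lambda>t. aa * deriv v t / v t) has_real_derivative
      (aa * deriv (deriv v) t * v t - aa * deriv v t * deriv v t) / (v t * v t)) (at t)"
    using vpos[of t] by (intro DERIV_divide DERIV_cmult ddv dv) (auto simp: less_imp_neq[symmetric])
  then show ?thesis using dm.dal_def[OF dm_PP] e by (simp add: DERIV_imp_deriv algebra_simps)
qed

definition "hh t = (v t)^2 - aa^2 * (deriv v t)^2"

lemma sigma_formula: "sigma_k k (B_endo k i0 v x) = real ((CARD('n) - 1) choose (k - 1)) * (bb * hh (x $ i0) / 2)^(k - 1)
   * (bb * bb * v (x $ i0) * (v (x $ i0) - aa^2 * deriv (deriv v) (x $ i0)))"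
proof -
  interpret G: dm i0 PP by (rule dm_PP)
  define t where "t = x $ i0"
  have ce: "conf_metric k i0 v = G.Gm"
    by (rule ext) (simp add: conf_metric_def cyl_metric_def G.Gm_def G.F_def G.Q_def G.S_def vec_eq_iff PP_def ee_def)
  define K where "K = bb * v t powr (2 * real CARD('n) / (real CARD('n) - 2 * real k))"
  define L1 where "L1 = K * (- G.dal t - (1 - G.al t^2) / 2) / PP t"
  define L2 where "L2 = K * (1 - G.al t^2) / (2 * PP t)"
  have c2: "CARD('n) > 2" using kn k1 by linarith
  have Be: "B_endo k i0 v x = (\<chi> i j. if i = j then (if i = i0 then L1 else L2) else 0)"
    unfolding B_endo_def ce G.B_closed[OF c2] L1_def L2_def K_def t_def bb_def by simp
  have sk: "sigma_k k (B_endo k i0 v x) = real ((CARD('n) - 1) choose k) * L2^k + real ((CARD('n) - 1) choose (k - 1)) * L1 * L2^(k - 1)"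
    unfolding Be using sigma_k_diag[of k "\<lambda>i. if i = i0 then L1 else L2"] esf_two[OF k1, of i0 L1 L2] kn by simp
  have KP: "K / PP t = bb * (v t)^2"
  proof -
    have "v t powr (2 * real CARD('n) / (real CARD('n) - 2 * real k)) / v t powr ee
       = v t powr (2 * real CARD('n) / (real CARD('n) - 2 * real k) - ee)" by (simp add: powr_diff)
    also have "2 * real CARD('n) / (real CARD('n) - 2 * real k) - ee = 2"
    proof -
      have d0: "real CARD('n) - 2 * real k \<noteq> 0" using nk_pos by simp
      have "2 * real CARD('n) / (real CARD('n) - 2 * real k) - ee = (2 * real CARD('n) - 4 * real k) / (real CARD('n) - 2 * real k)"
        by (simp add: ee_def diff_divide_distrib)
      also have "\<dots> = 2" using d0 by (simp add: field_simps)
      finally show ?thesis .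
    qed
    finally have "v t powr (2 * real CARD('n) / (real CARD('n) - 2 * real k)) / v t powr ee = (v t)^2"
      using vpos[of t] by simp
    then have "bb * (v t powr (2 * real CARD('n) / (real CARD('n) - 2 * real k)) / v t powr ee) = bb * (v t)^2"
      by simp
    then show ?thesis by (simp add: K_def PP_def)
  qed
  define V where "V = v t"
  define D where "D = deriv v t"
  define D2 where "D2 = deriv (deriv v) t"
  have Vp: "V > 0" using vpos by (simp add: V_def)
  have L2e: "L2 = bb * (V^2 - aa^2 * D^2) / 2"
  proof -
    have "L2 = (K / PP t) * (1 - G.al t^2) / 2" by (simp add: L2_def)
    also have "\<dots> = bb * (V^2 - aa^2 * D^2) / 2"
      unfolding KP al_eq using Vp by (simp add: V_def D_def field_simps power2_eq_square)
    finally show ?thesis .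
  qed
  have L1e: "L1 = bb * (- aa * (D2 * V - D * D) - (V^2 - aa^2 * D^2) / 2)"
  proof -
    have "L1 = (K / PP t) * (- G.dal t - (1 - G.al t^2) / 2)" by (simp add: L1_def)
    also have "\<dots> = bb * (- aa * (D2 * V - D * D) - (V^2 - aa^2 * D^2) / 2)"
      unfolding KP al_eq dal_eq using Vp by (simp add: V_def D_def D2_def field_simps power2_eq_square)
    finally show ?thesis .
  qed
  have cc: "real k * real ((CARD('n) - 1) choose k) = (real CARD('n) - real k) * real ((CARD('n) - 1) choose (k - 1))"
  proof -
    obtain j where kj: "k = Suc j" using k1 by (cases k) auto
    have "k * ((CARD('n) - 1) choose k) = (CARD('n) - 1) * ((CARD('n) - 1 - 1) choose j)"
      using times_binomial_minus1_eq[of k "CARD('n) - 1"] kj by simp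
    also have "\<dots> = (CARD('n) - 1 - j) * ((CARD('n) - 1) choose j)"
      using binomial_absorb_comp[of "CARD('n) - 1" j] by simp
    finally have "k * ((CARD('n) - 1) choose k) = (CARD('n) - k) * ((CARD('n) - 1) choose (k - 1))"
      using kj by simp
    then have "real (k * ((CARD('n) - 1) choose k)) = real ((CARD('n) - k) * ((CARD('n) - 1) choose (k - 1)))"
      by simp
    then show ?thesis using kn by (simp add: of_nat_diff)
  qed
  have L2k: "L2^k = L2^(k - 1) * L2" using k1 by (metis Suc_diff_le diff_Suc_1 power_Suc2)
  have "sigma_k k (B_endo k i0 v x) = L2^(k - 1) * (real ((CARD('n) - 1) choose k) * L2 + real ((CARD('n) - 1) choose (k - 1)) * L1)"
    unfolding sk L2k by (simp add: algebra_simps)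
  also have "real ((CARD('n) - 1) choose k) * L2 + real ((CARD('n) - 1) choose (k - 1)) * L1
     = real ((CARD('n) - 1) choose (k - 1)) * (bb * bb * V * (V - aa^2 * D2))"
    unfolding L1e L2e
    by (rule aux_sig[OF k_pos ab _ cc]) (simp add: bb_def)
  finally show ?thesis
    by (simp add: L2e hh_def V_def D_def D2_def t_def)
qed

lemma bb_pos: "bb > 0" using nk_pos k_pos by (simp add: bb_def)

lemma sig_zero_iff: "sigma_k k (B_endo k i0 v x) = 0 \<longleftrightarrow>
   hh (x $ i0)^(k - 1) * (v (x $ i0) - aa^2 * deriv (deriv v) (x $ i0)) = 0"
proof -
  have c: "real ((CARD('n) - 1) choose (k - 1)) \<noteq> 0" using kn k1 by simp
  have p: "(bb * hh (x $ i0) / 2)^(k - 1) = (bb / 2)^(k - 1) * hh (x $ i0)^(k - 1)"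
    by (simp add: power_mult_distrib[symmetric])
  have b: "(bb / 2)^(k - 1) \<noteq> 0" "bb * bb * v (x $ i0) \<noteq> 0" using bb_pos vpos[of "x $ i0"] by auto
  show ?thesis unfolding sigma_formula p using c b by simp
qed

lemma dhh: "(hh has_real_derivative 2 * deriv v t * (v t - aa^2 * deriv (deriv v) t)) (at t)"
  unfolding hh_def[abs_def]
  by (rule DERIV_cong[OF DERIV_diff[OF DERIV_power[OF dv] DERIV_cmult[OF DERIV_power[OF ddv]]]])
     (simp add: algebra_simps)

lemma sqrt_exp: "x > 0 \<Longrightarrow> sqrt x = exp (ln x / 2)"
proof -
  assume x: "x > 0"
  have "(exp (ln x / 2))^2 = x" using x by (simp add: exp_add[symmetric] power2_eq_square)
  then have "sqrt x = sqrt ((exp (ln x / 2))^2)" by simp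
  also have "\<dots> = exp (ln x / 2)" by simp
  finally show ?thesis .
qed

lemma forward:
  assumes all: "\<forall>x::real^'n. sigma_k k (B_endo k i0 v x) = 0" and h0: "hh 0 > 0"
  shows "\<exists>c. \<forall>t. v t = sqrt (hh 0) * cosh (bb * t - c)"
proof -
  have z: "hh t^(k - 1) * (v t - aa^2 * deriv (deriv v) t) = 0" for t
    using all[rule_format, of "\<chi> i. t"] sig_zero_iff[of "\<chi> i. t"] by simp
  have dk: "((\<lambda>t. hh t ^ k) has_real_derivative 0) (at t)" for t
  proof -
    have "((\<lambda>t. hh t ^ k) has_real_derivative of_nat k * (2 * deriv v t * (v t - aa^2 * deriv (deriv v) t) * hh t ^ (k - Suc 0))) (at t)"
      by (rule DERIV_power[OF dhh])
    moreover have "of_nat k * (2 * deriv v t * (v t - aa^2 * deriv (deriv v) t) * hh t ^ (k - Suc 0)) = 0"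
      using z[of t] by (simp add: algebra_simps)
    ultimately show ?thesis by simp
  qed
  have hk: "hh t ^ k = hh 0 ^ k" for t
  proof -
    have "\<forall>t. ((\<lambda>t. hh t ^ k) has_real_derivative 0) (at t)" using dk by blast
    from DERIV_isconst_all[OF this] show ?thesis .
  qed
  have hnz: "hh t \<noteq> 0" for t
  proof
    assume "hh t = 0"
    moreover have "k \<noteq> 0" using k1 by simp
    ultimately have "hh 0 ^ k = 0" using hk[of t] by (simp add: power_0_left)
    then show False using h0 by simp
  qed
  have ode: "deriv (deriv v) t = bb^2 * v t" for t
  proof -
    have "v t - aa^2 * deriv (deriv v) t = 0" using z[of t] hnz[of t] by simp
    then have "bb^2 * v t = bb^2 * aa^2 * deriv (deriv v) t" by simp
    also have "bb^2 * aa^2 = 1" using ab by (simp add: power_mult_distrib[symmetric] mult.commute)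
    finally show ?thesis by simp
  qed
  have ab2: "aa * (bb * y) = y" for y using ab by (simp add: mult.assoc[symmetric])
  define p where "p t = v t + aa * deriv v t" for t
  define q where "q t = v t - aa * deriv v t" for t
  have e1: "aa * deriv (deriv v) t = bb * v t" for t
    using ab by (simp add: ode power2_eq_square mult.assoc[symmetric])
  have e2: "bb * (aa * deriv v t) = deriv v t" for t
    using ab by (simp add: mult.assoc[symmetric] mult.commute[of bb aa])
  have dp: "(p has_real_derivative bb * p t) (at t)" for t
    unfolding p_def[abs_def]
    by (rule DERIV_cong[OF DERIV_add[OF dv DERIV_cmult[OF ddv]]])
       (simp only: e1 distrib_left e2 add.commute)
  have dq: "(q has_real_derivative - bb * q t) (at t)" for t
    unfolding q_def[abs_def]
    by (rule DERIV_cong[OF DERIV_diff[OF dv DERIV_cmult[OF ddv]]])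
       (simp add: e1 right_diff_distrib e2)
  have pe: "p t = p 0 * exp (bb * t)" for t
  proof -
    have d: "((\<lambda>t. p t * exp (- bb * t)) has_real_derivative 0) (at t)" for t
      by (rule DERIV_cong[OF DERIV_mult[OF dp DERIV_exp[THEN DERIV_chain2, OF DERIV_cmult[OF DERIV_ident]]]])
         (simp add: algebra_simps)
    have "\<forall>t. ((\<lambda>t. p t * exp (- bb * t)) has_real_derivative 0) (at t)" using d by blast
    from DERIV_isconst_all[OF this, of t 0] have "p t * exp (- bb * t) = p 0" by simp
    then show ?thesis by (simp add: exp_minus field_simps)
  qed
  have qe: "q t = q 0 * exp (- bb * t)" for t
  proof -
    have d: "((\<lambda>t. q t * exp (bb * t)) has_real_derivative 0) (at t)" for t
      by (rule DERIV_cong[OF DERIV_mult[OF dq DERIV_exp[THEN DERIV_chain2, OF DERIV_cmult[OF DERIV_ident]]]])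
         (simp add: algebra_simps)
    have "\<forall>t. ((\<lambda>t. q t * exp (bb * t)) has_real_derivative 0) (at t)" using d by blast
    from DERIV_isconst_all[OF this, of t 0] have "q t * exp (bb * t) = q 0" by simp
    then show ?thesis by (simp add: exp_minus field_simps)
  qed
  have h0pq: "hh 0 = p 0 * q 0" by (simp add: hh_def p_def q_def algebra_simps power2_eq_square)
  have sum: "p 0 + q 0 = 2 * v 0" by (simp add: p_def q_def)
  have pp: "p 0 > 0" and qp: "q 0 > 0"
  proof -
    have "p 0 * q 0 > 0" using h0 h0pq by simp
    moreover have "p 0 + q 0 > 0" using sum vpos[of 0] by simp
    ultimately show "p 0 > 0" "q 0 > 0"
      by (auto simp: zero_less_mult_iff)
  qed
  define c where "c = ln (q 0) / 2 - ln (p 0) / 2"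
  have ec: "exp c = sqrt (q 0) / sqrt (p 0)"
    using pp qp by (simp add: c_def exp_diff sqrt_exp)
  have sh: "sqrt (hh 0) = sqrt (p 0) * sqrt (q 0)" by (simp add: h0pq real_sqrt_mult)
  show ?thesis
  proof (intro exI allI)
    fix t
    have sp: "sqrt (p 0) > 0" "sqrt (q 0) > 0" using pp qp by auto
    have "v t = (p t + q t) / 2" by (simp add: p_def q_def)
    also have "\<dots> = (p 0 * exp (bb * t) + q 0 * exp (- bb * t)) / 2" using pe[of t] qe[of t] by simp
    also have "\<dots> = sqrt (hh 0) * cosh (bb * t - c)"
    proof -
      have "cosh (bb * t - c) = (exp (bb * t) / exp c + exp c * exp (- bb * t)) / 2"
        by (simp add: cosh_def exp_diff exp_minus field_simps)
      then have "sqrt (hh 0) * cosh (bb * t - c)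
         = (sqrt (p 0) * sqrt (q 0) * (exp (bb * t) * sqrt (p 0) / sqrt (q 0)) + sqrt (p 0) * sqrt (q 0) * (sqrt (q 0) / sqrt (p 0) * exp (- bb * t))) / 2"
        unfolding sh ec using sp by (simp add: field_simps)
      also have "\<dots> = (p 0 * exp (bb * t) + q 0 * exp (- bb * t)) / 2"
        using sp pp qp by (simp add: field_simps) (simp add: mult.assoc[symmetric])
      finally show ?thesis by simp
    qed
    finally show "v t = sqrt (hh 0) * cosh (bb * t - c)" .
  qed
qed

lemma backward:
  assumes vf: "\<forall>t. v t = sqrt h * cosh (bb * t - c)"
  shows "sigma_k k (B_endo k i0 v x) = 0"
proof -
  have vfun: "v = (\<lambda>t. sqrt h * cosh (bb * t - c))" using vf by (intro ext) simp
  have d1: "deriv v = (\<lambda>t. sqrt h * (sinh (bb * t - c) * bb))"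
  proof (intro ext DERIV_imp_deriv)
    fix t
    show "(v has_real_derivative sqrt h * (sinh (bb * t - c) * bb)) (at t)"
      unfolding vfun
      by (rule DERIV_cong[OF DERIV_cmult[OF has_field_derivative_cosh[OF DERIV_diff[OF DERIV_cmult[OF DERIV_ident] DERIV_const]]]]) simp
  qed
  have d2: "deriv (deriv v) = (\<lambda>t. sqrt h * (cosh (bb * t - c) * bb * bb))"
  proof (intro ext DERIV_imp_deriv)
    fix t
    have "((\<lambda>t. sqrt h * (sinh (bb * t - c) * bb)) has_real_derivative sqrt h * (cosh (bb * t - c) * bb * bb)) (at t)"
      by (rule DERIV_cong[OF DERIV_cmult[OF DERIV_cmult_right[OF has_field_derivative_sinh[OF DERIV_diff[OF DERIV_cmult[OF DERIV_ident] DERIV_const]]]]]) simp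
    then show "(deriv v has_real_derivative sqrt h * (cosh (bb * t - c) * bb * bb)) (at t)"
      unfolding d1 .
  qed
  have "v (x $ i0) - aa^2 * deriv (deriv v) (x $ i0) = 0"
  proof -
    have "aa^2 * deriv (deriv v) (x $ i0) = (aa * bb)^2 * v (x $ i0)"
      unfolding d2 using vf by (simp add: power2_eq_square algebra_simps)
    then show ?thesis using ab by simp
  qed
  then show ?thesis using sig_zero_iff by simp
qed

lemma main_iff:
  assumes h0d: "h0 = (v 0)^2 - (2 * real k / (real CARD('n) - 2 * real k))^2 * (deriv v 0)^2" and h0p: "h0 > 0"
  shows "(\<forall>x::real^'n. sigma_k k (B_endo k i0 v x) = 0) \<longleftrightarrow>
         (\<exists>c::real. \<forall>t. v t = sqrt h0 * cosh ((real CARD('n) - 2 * real k) / (2 * real k) * t - c))"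
proof -
  have hh0: "hh 0 = h0" using h0d by (simp add: hh_def aa_def)
  show ?thesis
  proof
    assume "\<forall>x::real^'n. sigma_k k (B_endo k i0 v x) = 0"
    from forward[OF this] hh0 h0p show "\<exists>c::real. \<forall>t. v t = sqrt h0 * cosh ((real CARD('n) - 2 * real k) / (2 * real k) * t - c)"
      by (simp add: bb_def)
  next
    assume "\<exists>c::real. \<forall>t. v t = sqrt h0 * cosh ((real CARD('n) - 2 * real k) / (2 * real k) * t - c)"
    then obtain c where "\<forall>t. v t = sqrt h0 * cosh (bb * t - c)" by (auto simp: bb_def)
    from backward[OF this] show "\<forall>x::real^'n. sigma_k k (B_endo k i0 v x) = 0" by blast
  qed
qed

end

theorem proposition2p1:
  fixes v :: "real \<Rightarrow> real" and k :: nat and i0 :: "'n::finite"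
  assumes "2 \<le> 2 * k" and "2 * k < CARD('n)"
    and "smooth_real v" and "\<forall>t. v t > 0"
    and "h0 = (v 0)^2 - (2 * real k / (real CARD('n) - 2 * real k))^2 * (deriv v 0)^2"
    and "h0 > 0"
  shows "(\<forall>x::real^'n. sigma_k k (B_endo k i0 v x) = 0) \<longleftrightarrow>
         (\<exists>c::real. \<forall>t. v t = sqrt h0 * cosh ((real CARD('n) - 2 * real k) / (2 * real k) * t - c))"
proof -
  have k1: "1 \<le> k" using assms(1) by simp
  have vp: "\<And>t. v t > 0" using assms(4) by simp
  show ?thesis by (rule main_iff[OF k1 assms(2) vp assms(3) assms(5) assms(6)])
qed


end
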